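(* Let $(\mathcal A,\jmath)_K$ be a $\mathrm{C}^*$-net bundle over a pathwise connected poset $K$ and fix $o\in K$. The set of states of $(\mathcal A,\jmath)_K$ is in one-to-one correspondence with the set of $\pi_1^o(K)$-invariant states of the holonomy dynamical system $(\mathcal A_o,\pi_1^o(K),\jmath_* )$.
   Context: Poset homotopy: $0$-simplices are elements of $K$; an $n$-simplex $x$ ($n\ge1$) consists of $(n-1)$-simplices $\partial_0x,\dots,\partial_nx$ and a support $|x|\in K$ with $|\partial_ix|\le|x|$. Paths are concatenations $b_n*\cdots*b_1$ with $\partial_0b_i=\partial_1b_{i+1}$; homotopy is generated by replacing consecutive $\partial_0c*\partial_2c$ by $\partial_1c$ or conversely; $\pi_1^o(K)$ is the group of homotopy classes of loops at $o$. A $\mathrm{C}^*$-net bundle: unital $\mathrm{C}^*$-algebras $\mathcal A_a$ and ${}^*$-isomorphisms $\jmath_{ea}:\mathcal A_a\to\mathcal A_e$ ($a\le e$) with $\jmath_{ea}\circ\jmath_{ad}=\jmath_{ed}$; $\jmath_{ae}:=\jmath_{ea}^{-1}$. Holonomy: $\jmath_b:=\jmath_{\partial_0b\,|b|}\circ\jmath_{|b|\,\partial_1b}$ for a $1$-simplex $b$, $\jmath_p:=\jmath_{b_n}\circ\cdots\circ\jmath_{b_1}$ for a path; $\jmath_p$ is homotopy invariant and $\jmath_{*,[p]}:=\jmath_p$ defines an action of $\pi_1^o(K)$ on $\mathcal A_o$. A state of the net bundle is a family of states $\omega_a$ of $\mathcal A_a$ with $\omega_a=\omega_e\circ\jmath_{ea}$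 for $a\le e$; an invariant state of the dynamical system is a state $\varphi$ of $\mathcal A_o$ with $\varphi\circ\jmath_{*,[p]}=\varphi$ for all $[p]$. *)

theory Defs
  imports Complex_Main "HOL-Library.FuncSet"
begin

record 'x cstar =
  cs_carrier :: "'x set"
  cs_add :: "'x \<Rightarrow> 'x \<Rightarrow> 'x"
  cs_mul :: "'x \<Rightarrow> 'x \<Rightarrow> 'x"
  cs_smul :: "complex \<Rightarrow> 'x \<Rightarrow> 'x"
  cs_zero :: 'x
  cs_one :: 'x
  cs_star :: "'x \<Rightarrow> 'x"
  cs_norm :: "'x \<Rightarrow> real"

definition cs_diff :: "'x cstar \<Rightarrow> 'x \<Rightarrow> 'x \<Rightarrow> 'x" where
  "cs_diff A x y = cs_add A x (cs_smul A (-1) y)"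

definition unital_cstar_algebra :: "'x cstar \<Rightarrow> bool" where
  "unital_cstar_algebra A \<longleftrightarrow>
    (let C = cs_carrier A; ad = cs_add A; mu = cs_mul A; sm = cs_smul A;
         z = cs_zero A; u = cs_one A; st = cs_star A; n = cs_norm A in
     z \<in> C \<and> u \<in> C \<and>
     (\<forall>x\<in>C. \<forall>y\<in>C. ad x y \<in> C \<and> mu x y \<in> C) \<and>
     (\<forall>a. \<forall>x\<in>C. sm a x \<in> C) \<and> (\<forall>x\<in>C. st x \<in> C) \<and>
     \<comment> \<open>complex vector space\<close>
     (\<forall>x\<in>C. \<forall>y\<in>C. \<forall>w\<in>C. ad (ad x y) w = ad x (ad y w)) \<and>
     (\<forall>x\<in>C. \<forall>y\<in>C. ad x y = ad y x) \<and>
     (\<forall>x\<in>C. ad z x = x) \<and>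
     (\<forall>x\<in>C. ad x (sm (-1) x) = z) \<and>
     (\<forall>x\<in>C. sm 1 x = x) \<and>
     (\<forall>a b. \<forall>x\<in>C. sm (a * b) x = sm a (sm b x)) \<and>
     (\<forall>a b. \<forall>x\<in>C. sm (a + b) x = ad (sm a x) (sm b x)) \<and>
     (\<forall>a. \<forall>x\<in>C. \<forall>y\<in>C. sm a (ad x y) = ad (sm a x) (sm a y)) \<and>
     \<comment> \<open>unital associative algebra\<close>
     (\<forall>x\<in>C. \<forall>y\<in>C. \<forall>w\<in>C. mu (mu x y) w = mu x (mu y w)) \<and>
     (\<forall>x\<in>C. \<forall>y\<in>C. \<forall>w\<in>C. mu x (ad y w) = ad (mu x y) (mu x w)) \<and>
     (\<forall>x\<in>C. \<forall>y\<in>C. \<forall>w\<in>C. mu (ad x y) w = ad (mu x w) (mu y w)) \<and>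
     (\<forall>a. \<forall>x\<in>C. \<forall>y\<in>C. mu (sm a x) y = sm a (mu x y) \<and> mu x (sm a y) = sm a (mu x y)) \<and>
     (\<forall>x\<in>C. mu u x = x \<and> mu x u = x) \<and>
     \<comment> \<open>involution\<close>
     (\<forall>x\<in>C. st (st x) = x) \<and>
     (\<forall>x\<in>C. \<forall>y\<in>C. st (ad x y) = ad (st x) (st y)) \<and>
     (\<forall>a. \<forall>x\<in>C. st (sm a x) = sm (cnj a) (st x)) \<and>
     (\<forall>x\<in>C. \<forall>y\<in>C. st (mu x y) = mu (st y) (st x)) \<and>
     \<comment> \<open>submultiplicative norm with the C*-identity\<close>
     (\<forall>x\<in>C. 0 \<le> n x \<and> (n x = 0 \<longleftrightarrow> x = z)) \<and>
     (\<forall>x\<in>C. \<forall>y\<in>C. n (ad x y) \<le> n x + n y) \<and>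
     (\<forall>a. \<forall>x\<in>C. n (sm a x) = cmod a * n x) \<and>
     (\<forall>x\<in>C. \<forall>y\<in>C. n (mu x y) \<le> n x * n y) \<and>
     (\<forall>x\<in>C. n (mu (st x) x) = (n x)\<^sup>2) \<and>
     \<comment> \<open>completeness\<close>
     (\<forall>s::nat \<Rightarrow> 'x. (\<forall>k. s k \<in> C) \<longrightarrow>
        (\<forall>e>0. \<exists>N. \<forall>m\<ge>N. \<forall>k\<ge>N. n (cs_diff A (s m) (s k)) < e) \<longrightarrow>
        (\<exists>l\<in>C. (\<lambda>k. n (cs_diff A (s k) l)) \<longlonglongrightarrow> 0)))"

text \<open>A state: a positive normalised linear functional (taken extensional, i.e.
  \<open>undefined\<close> off the carrier, so that states are determined by their values on it).\<close>
definition is_state :: "'x cstar \<Rightarrow> ('x \<Rightarrow> complex) \<Rightarrow> bool" where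
  "is_state A \<omega> \<longleftrightarrow> \<omega> \<in> extensional (cs_carrier A) \<and>
     (\<forall>x\<in>cs_carrier A. \<forall>y\<in>cs_carrier A. \<omega> (cs_add A x y) = \<omega> x + \<omega> y) \<and>
     (\<forall>a. \<forall>x\<in>cs_carrier A. \<omega> (cs_smul A a x) = a * \<omega> x) \<and>
     (\<forall>x\<in>cs_carrier A. Im (\<omega> (cs_mul A (cs_star A x) x)) = 0 \<and>
                         Re (\<omega> (cs_mul A (cs_star A x) x)) \<ge> 0) \<and>
     \<omega> (cs_one A) = 1"

definition star_iso :: "'x cstar \<Rightarrow> 'x cstar \<Rightarrow> ('x \<Rightarrow> 'x) \<Rightarrow> bool" where
  "star_iso A B f \<longleftrightarrow> bij_betw f (cs_carrier A) (cs_carrier B) \<and>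
     (\<forall>x\<in>cs_carrier A. \<forall>y\<in>cs_carrier A.
        f (cs_add A x y) = cs_add B (f x) (f y) \<and> f (cs_mul A x y) = cs_mul B (f x) (f y)) \<and>
     (\<forall>a. \<forall>x\<in>cs_carrier A. f (cs_smul A a x) = cs_smul B a (f x)) \<and>
     (\<forall>x\<in>cs_carrier A. f (cs_star A x) = cs_star B (f x)) \<and>
     f (cs_one A) = cs_one B"

type_synonym 'k simplex1 = "'k \<times> 'k \<times> 'k"

definition bd0 :: "'k simplex1 \<Rightarrow> 'k" where "bd0 b = fst b"
definition bd1 :: "'k simplex1 \<Rightarrow> 'k" where "bd1 b = fst (snd b)"
definition supp :: "'k simplex1 \<Rightarrow> 'k" where "supp b = snd (snd b)"

definition is_simplex1 :: "'k::order set \<Rightarrow> 'k simplex1 \<Rightarrow> bool" where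
  "is_simplex1 K b \<longleftrightarrow> bd0 b \<in> K \<and> bd1 b \<in> K \<and> supp b \<in> K \<and>
     bd0 b \<le> supp b \<and> bd1 b \<le> supp b"

text \<open>A path from \<open>a\<close> to \<open>e\<close>, listed in order of traversal: the list
  \<open>[b\<^sub>1,\<dots>,b\<^sub>n]\<close> represents \<open>b\<^sub>n * \<dots> * b\<^sub>1\<close>
  (with \<open>\<partial>\<^sub>0 b\<^sub>i = \<partial>\<^sub>1 b\<^sub>i\<^sub>+\<^sub>1\<close>).\<close>
fun is_path :: "'k::order set \<Rightarrow> 'k \<Rightarrow> 'k \<Rightarrow> 'k simplex1 list \<Rightarrow> bool" where
  "is_path K a e [] \<longleftrightarrow> a \<in> K \<and> a = e"
| "is_path K a e (b # bs) \<longleftrightarrow> is_simplex1 K b \<and> bd1 b = a \<and> is_path K (bd0 b) e bs"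

definition pathwise_connected :: "'k::order set \<Rightarrow> bool" where
  "pathwise_connected K \<longleftrightarrow> (\<forall>a\<in>K. \<forall>e\<in>K. \<exists>p. is_path K a e p)"

text \<open>\<open>j e a\<close> is \<open>\<jmath>\<^sub>e\<^sub>a : \<A>\<^sub>a \<rightarrow> \<A>\<^sub>e\<close> for \<open>a \<le> e\<close>.\<close>
definition cstar_net_bundle ::
  "'k::order set \<Rightarrow> ('k \<Rightarrow> 'x cstar) \<Rightarrow> ('k \<Rightarrow> 'k \<Rightarrow> 'x \<Rightarrow> 'x) \<Rightarrow> bool" where
  "cstar_net_bundle K A j \<longleftrightarrow>
     (\<forall>a\<in>K. unital_cstar_algebra (A a)) \<and>
     (\<forall>a\<in>K. \<forall>e\<in>K. a \<le> e \<longrightarrow> star_iso (A a) (A e) (j e a)) \<and>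
     (\<forall>d\<in>K. \<forall>a\<in>K. \<forall>e\<in>K. d \<le> a \<longrightarrow> a \<le> e \<longrightarrow>
        (\<forall>x\<in>cs_carrier (A d). j e a (j a d x) = j e d x))"

definition hol1 :: "('k \<Rightarrow> 'x cstar) \<Rightarrow> ('k \<Rightarrow> 'k \<Rightarrow> 'x \<Rightarrow> 'x) \<Rightarrow> 'k simplex1 \<Rightarrow> 'x \<Rightarrow> 'x" where
  "hol1 A j b = inv_into (cs_carrier (A (bd0 b))) (j (supp b) (bd0 b)) \<circ> j (supp b) (bd1 b)"

fun hol :: "('k \<Rightarrow> 'x cstar) \<Rightarrow> ('k \<Rightarrow> 'k \<Rightarrow> 'x \<Rightarrow> 'x) \<Rightarrow> 'k simplex1 list \<Rightarrow> 'x \<Rightarrow> 'x" where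
  "hol A j [] = id"
| "hol A j (b # bs) = hol A j bs \<circ> hol1 A j b"

definition net_state ::
  "'k::order set \<Rightarrow> ('k \<Rightarrow> 'x cstar) \<Rightarrow> ('k \<Rightarrow> 'k \<Rightarrow> 'x \<Rightarrow> 'x) \<Rightarrow> ('k \<Rightarrow> 'x \<Rightarrow> complex) \<Rightarrow> bool" where
  "net_state K A j \<omega> \<longleftrightarrow> \<omega> \<in> extensional K \<and> (\<forall>a\<in>K. is_state (A a) (\<omega> a)) \<and>
     (\<forall>a\<in>K. \<forall>e\<in>K. a \<le> e \<longrightarrow> (\<forall>x\<in>cs_carrier (A a). \<omega> a x = \<omega> e (j e a x)))"

text \<open>Invariant states of the holonomy dynamical system: \<open>\<phi> \<circ> \<jmath>\<^sub>*\<^sub>,\<^sub>[\<^sub>p\<^sub>] = \<phi>\<close> for every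
  class \<open>[p] \<in> \<pi>\<^sub>1\<^sup>o(K)\<close>; since \<open>\<jmath>\<^sub>*\<^sub>,\<^sub>[\<^sub>p\<^sub>] := \<jmath>\<^sub>p\<close>, this ranges over all loops at \<open>z\<close>.\<close>
definition invariant_state ::
  "'k::order set \<Rightarrow> ('k \<Rightarrow> 'x cstar) \<Rightarrow> ('k \<Rightarrow> 'k \<Rightarrow> 'x \<Rightarrow> 'x) \<Rightarrow> 'k \<Rightarrow> ('x \<Rightarrow> complex) \<Rightarrow> bool" where
  "invariant_state K A j z \<phi> \<longleftrightarrow> is_state (A z) \<phi> \<and>
     (\<forall>p. is_path K z z p \<longrightarrow> (\<forall>x\<in>cs_carrier (A z). \<phi> (hol A j p x) = \<phi> x))"

end

theory Submission
  imports Defs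
begin

lemma uca_closure:
  assumes "unital_cstar_algebra A"
  shows "cs_one A \<in> cs_carrier A \<and>
     (\<forall>x\<in>cs_carrier A. \<forall>y\<in>cs_carrier A. cs_add A x y \<in> cs_carrier A \<and> cs_mul A x y \<in> cs_carrier A) \<and>
     (\<forall>a. \<forall>x\<in>cs_carrier A. cs_smul A a x \<in> cs_carrier A) \<and> (\<forall>x\<in>cs_carrier A. cs_star A x \<in> cs_carrier A)"
  using assms unfolding unital_cstar_algebra_def Let_def by (elim conjE) (intro conjI; assumption)

lemma uca_closed:
  assumes "unital_cstar_algebra A"
  shows "cs_one A \<in> cs_carrier A"
    "\<And>x y. x \<in> cs_carrier A \<Longrightarrow> y \<in> cs_carrier A \<Longrightarrow> cs_add A x y \<in> cs_carrier A"
    "\<And>x y. x \<in> cs_carrier A \<Longrightarrow> y \<in> cs_carrier A \<Longrightarrow> cs_mul A x y \<in> cs_carrier A"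
    "\<And>a x. x \<in> cs_carrier A \<Longrightarrow> cs_smul A a x \<in> cs_carrier A"
    "\<And>x. x \<in> cs_carrier A \<Longrightarrow> cs_star A x \<in> cs_carrier A"
  using uca_closure[OF assms] by blast+

lemma star_iso_inv:
  assumes f: "star_iso A B f" and U: "unital_cstar_algebra A"
  shows "star_iso B A (inv_into (cs_carrier A) f)"
proof -
  let ?g = "inv_into (cs_carrier A) f"
  have bij: "bij_betw f (cs_carrier A) (cs_carrier B)" using f unfolding star_iso_def by blast
  have gin: "\<And>y. y \<in> cs_carrier B \<Longrightarrow> ?g y \<in> cs_carrier A"
    by (rule bij_betw_apply[OF bij_betw_inv_into[OF bij]])
  have fg: "\<And>y. y \<in> cs_carrier B \<Longrightarrow> f (?g y) = y"
    by (rule bij_betw_inv_into_right[OF bij])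
  have gf: "\<And>x. x \<in> cs_carrier A \<Longrightarrow> ?g (f x) = x"
    by (rule bij_betw_inv_into_left[OF bij])
  note cl = uca_closed[OF U]
  have ops: "\<forall>x\<in>cs_carrier A. \<forall>y\<in>cs_carrier A.
        f (cs_add A x y) = cs_add B (f x) (f y) \<and> f (cs_mul A x y) = cs_mul B (f x) (f y)"
    "\<forall>a. \<forall>x\<in>cs_carrier A. f (cs_smul A a x) = cs_smul B a (f x)"
    "\<forall>x\<in>cs_carrier A. f (cs_star A x) = cs_star B (f x)"
    "f (cs_one A) = cs_one B" using f unfolding star_iso_def by blast+
  show ?thesis unfolding star_iso_def
  proof (intro conjI ballI allI)
    show "bij_betw ?g (cs_carrier B) (cs_carrier A)" by (rule bij_betw_inv_into[OF bij])
  next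
    fix x y assume x: "x \<in> cs_carrier B" and y: "y \<in> cs_carrier B"
    have "?g (cs_add B x y) = ?g (f (cs_add A (?g x) (?g y)))"
      using ops(1) gin[OF x] gin[OF y] fg[OF x] fg[OF y] by simp
    also have "\<dots> = cs_add A (?g x) (?g y)" by (rule gf[OF cl(2)[OF gin[OF x] gin[OF y]]])
    finally show "?g (cs_add B x y) = cs_add A (?g x) (?g y)" .
    have "?g (cs_mul B x y) = ?g (f (cs_mul A (?g x) (?g y)))"
      using ops(1) gin[OF x] gin[OF y] fg[OF x] fg[OF y] by simp
    also have "\<dots> = cs_mul A (?g x) (?g y)" by (rule gf[OF cl(3)[OF gin[OF x] gin[OF y]]])
    finally show "?g (cs_mul B x y) = cs_mul A (?g x) (?g y)" .
  next
    fix a x assume x: "x \<in> cs_carrier B"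
    have "?g (cs_smul B a x) = ?g (f (cs_smul A a (?g x)))"
      using ops(2) gin[OF x] fg[OF x] by simp
    also have "\<dots> = cs_smul A a (?g x)" by (rule gf[OF cl(4)[OF gin[OF x]]])
    finally show "?g (cs_smul B a x) = cs_smul A a (?g x)" .
  next
    fix x assume x: "x \<in> cs_carrier B"
    have "?g (cs_star B x) = ?g (f (cs_star A (?g x)))"
      using ops(3) gin[OF x] fg[OF x] by simp
    also have "\<dots> = cs_star A (?g x)" by (rule gf[OF cl(5)[OF gin[OF x]]])
    finally show "?g (cs_star B x) = cs_star A (?g x)" .
  next
    show "?g (cs_one B) = cs_one A" using ops(4) gf[OF cl(1)] by simp
  qed
qed

lemma star_iso_comp:
  assumes f: "star_iso A B f" and g: "star_iso B C g"
  shows "star_iso A C (g \<circ> f)"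
proof -
  have bf: "bij_betw f (cs_carrier A) (cs_carrier B)" using f unfolding star_iso_def by blast
  have fin: "\<And>x. x \<in> cs_carrier A \<Longrightarrow> f x \<in> cs_carrier B" by (rule bij_betw_apply[OF bf])
  show ?thesis using f g fin bij_betw_trans[OF bf] unfolding star_iso_def by auto
qed

lemma si_in: "star_iso A B f \<Longrightarrow> x \<in> cs_carrier A \<Longrightarrow> f x \<in> cs_carrier B"
  unfolding star_iso_def using bij_betw_apply by metis

lemma star_iso_id: "star_iso A A id"
  unfolding star_iso_def by auto

lemma state_pullback:
  assumes f: "star_iso A B f" and U: "unital_cstar_algebra A" and S: "is_state B \<phi>"
  shows "is_state A (restrict (\<phi> \<circ> f) (cs_carrier A))"
proof -
  have bf: "bij_betw f (cs_carrier A) (cs_carrier B)" using f unfolding star_iso_def by blast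
  have fin: "\<And>x. x \<in> cs_carrier A \<Longrightarrow> f x \<in> cs_carrier B" by (rule bij_betw_apply[OF bf])
  note cl = uca_closed[OF U]
  have ops: "\<forall>x\<in>cs_carrier A. \<forall>y\<in>cs_carrier A.
        f (cs_add A x y) = cs_add B (f x) (f y) \<and> f (cs_mul A x y) = cs_mul B (f x) (f y)"
    "\<forall>a. \<forall>x\<in>cs_carrier A. f (cs_smul A a x) = cs_smul B a (f x)"
    "\<forall>x\<in>cs_carrier A. f (cs_star A x) = cs_star B (f x)"
    "f (cs_one A) = cs_one B" using f unfolding star_iso_def by blast+
  have st: "\<forall>x\<in>cs_carrier B. \<forall>y\<in>cs_carrier B. \<phi> (cs_add B x y) = \<phi> x + \<phi> y"
     "\<forall>a. \<forall>x\<in>cs_carrier B. \<phi> (cs_smul B a x) = a * \<phi> x"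
     "\<forall>x\<in>cs_carrier B. Im (\<phi> (cs_mul B (cs_star B x) x)) = 0 \<and>
                         Re (\<phi> (cs_mul B (cs_star B x) x)) \<ge> 0"
     "\<phi> (cs_one B) = 1" using S unfolding is_state_def by blast+
  show ?thesis unfolding is_state_def
  proof (intro conjI ballI allI)
    fix x y assume x: "x \<in> cs_carrier A" and y: "y \<in> cs_carrier A"
    show "restrict (\<phi> \<circ> f) (cs_carrier A) (cs_add A x y) =
          restrict (\<phi> \<circ> f) (cs_carrier A) x + restrict (\<phi> \<circ> f) (cs_carrier A) y"
    proof -
      have "f (cs_add A x y) = cs_add B (f x) (f y)" using ops(1) x y by blast
      moreover have "\<phi> (cs_add B (f x) (f y)) = \<phi> (f x) + \<phi> (f y)" using st(1) fin[OF x] fin[OF y] by blast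
      ultimately show ?thesis using x y cl(2)[OF x y] by simp
    qed
  next
    fix a x assume x: "x \<in> cs_carrier A"
    show "restrict (\<phi> \<circ> f) (cs_carrier A) (cs_smul A a x) = a * restrict (\<phi> \<circ> f) (cs_carrier A) x"
    proof -
      have "f (cs_smul A a x) = cs_smul B a (f x)" using ops(2) x by blast
      moreover have "\<phi> (cs_smul B a (f x)) = a * \<phi> (f x)" using st(2) fin[OF x] by blast
      ultimately show ?thesis using x cl(4)[OF x] by simp
    qed
  next
    fix x assume x: "x \<in> cs_carrier A"
    have e: "restrict (\<phi> \<circ> f) (cs_carrier A) (cs_mul A (cs_star A x) x)
        = \<phi> (cs_mul B (cs_star B (f x)) (f x))"
    proof -
      have "f (cs_mul A (cs_star A x) x) = cs_mul B (f (cs_star A x)) (f x)" using ops(1) x cl(5)[OF x] by blast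
      moreover have "f (cs_star A x) = cs_star B (f x)" using ops(3) x by blast
      ultimately show ?thesis using cl(3)[OF cl(5)[OF x] x] by simp
    qed
    show "Im (restrict (\<phi> \<circ> f) (cs_carrier A) (cs_mul A (cs_star A x) x)) = 0"
      using e st(3) fin[OF x] by simp
    show "Re (restrict (\<phi> \<circ> f) (cs_carrier A) (cs_mul A (cs_star A x) x)) \<ge> 0"
      using e st(3) fin[OF x] by simp
  next
    show "restrict (\<phi> \<circ> f) (cs_carrier A) \<in> extensional (cs_carrier A)" by simp
    show "restrict (\<phi> \<circ> f) (cs_carrier A) (cs_one A) = 1" using cl(1) ops(4) st(4) by simp
  qed
qed

context
  fixes K :: "'k::order set" and A :: "'k \<Rightarrow> 'x cstar" and j :: "'k \<Rightarrow> 'k \<Rightarrow> 'x \<Rightarrow> 'x"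
  assumes N: "cstar_net_bundle K A j"
begin

lemma N_U: "a \<in> K \<Longrightarrow> unital_cstar_algebra (A a)"
  using N[unfolded cstar_net_bundle_def, THEN conjunct1] by simp

lemma N_iso: "a \<in> K \<Longrightarrow> e \<in> K \<Longrightarrow> a \<le> e \<Longrightarrow> star_iso (A a) (A e) (j e a)"
  using N[unfolded cstar_net_bundle_def, THEN conjunct2, THEN conjunct1] by simp

lemma N_comp: "d \<in> K \<Longrightarrow> a \<in> K \<Longrightarrow> e \<in> K \<Longrightarrow> d \<le> a \<Longrightarrow> a \<le> e \<Longrightarrow>
   x \<in> cs_carrier (A d) \<Longrightarrow> j e a (j a d x) = j e d x"
  using N[unfolded cstar_net_bundle_def, THEN conjunct2, THEN conjunct2] by simp

lemma jaa_id:
  assumes a: "a \<in> K" and x: "x \<in> cs_carrier (A a)"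
  shows "j a a x = x"
proof -
  have bij: "bij_betw (j a a) (cs_carrier (A a)) (cs_carrier (A a))"
    using N_iso[OF a a] unfolding star_iso_def by blast
  have "j a a x \<in> cs_carrier (A a)" by (rule bij_betw_apply[OF bij x])
  moreover have "j a a (j a a x) = j a a x" using N_comp[OF a a a _ _ x] by simp
  ultimately show ?thesis using bij x unfolding bij_betw_def by (meson inj_onD)
qed

lemma inv_jaa:
  assumes a: "a \<in> K" and x: "x \<in> cs_carrier (A a)"
  shows "inv_into (cs_carrier (A a)) (j a a) x = x"
proof -
  have bij: "bij_betw (j a a) (cs_carrier (A a)) (cs_carrier (A a))"
    using N_iso[OF a a] unfolding star_iso_def by blast
  have "inv_into (cs_carrier (A a)) (j a a) (j a a x) = x"
    by (rule bij_betw_inv_into_left[OF bij x])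
  thus ?thesis using jaa_id[OF a x] by simp
qed

lemma hol1_iso:
  assumes b: "is_simplex1 K b"
  shows "star_iso (A (bd1 b)) (A (bd0 b)) (hol1 A j b)"
proof -
  have i1: "star_iso (A (bd1 b)) (A (supp b)) (j (supp b) (bd1 b))"
    using b N_iso unfolding is_simplex1_def by blast
  have i0: "star_iso (A (bd0 b)) (A (supp b)) (j (supp b) (bd0 b))"
    using b N_iso unfolding is_simplex1_def by blast
  have U: "unital_cstar_algebra (A (bd0 b))" using b N_U unfolding is_simplex1_def by blast
  show ?thesis unfolding hol1_def
    by (rule star_iso_comp[OF i1 star_iso_inv[OF i0 U]])
qed

lemma hol_iso: "is_path K a e p \<Longrightarrow> star_iso (A a) (A e) (hol A j p)"
proof (induction p arbitrary: a)
  case Nil then show ?case using star_iso_id[of "A a"] by (simp add: id_def)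
next
  case (Cons b bs)
  have b: "is_simplex1 K b" "bd1 b = a" "is_path K (bd0 b) e bs" using Cons.prems by auto
  have "star_iso (A (bd1 b)) (A e) (hol A j bs \<circ> hol1 A j b)"
    by (rule star_iso_comp[OF hol1_iso[OF b(1)] Cons.IH[OF b(3)]])
  then show ?case using b(2) by (simp add: comp_def)
qed

lemma hol_in: "is_path K a e p \<Longrightarrow> x \<in> cs_carrier (A a) \<Longrightarrow> hol A j p x \<in> cs_carrier (A e)"
  by (rule si_in[OF hol_iso])

lemma net_state_hol1:
  assumes w: "net_state K A j \<omega>" and b: "is_simplex1 K b" and x: "x \<in> cs_carrier (A (bd1 b))"
  shows "\<omega> (bd0 b) (hol1 A j b x) = \<omega> (bd1 b) x"
proof -
  let ?s = "supp b" and ?d0 = "bd0 b" and ?d1 = "bd1 b"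
  have K: "?s \<in> K" "?d0 \<in> K" "?d1 \<in> K" "?d0 \<le> ?s" "?d1 \<le> ?s" using b unfolding is_simplex1_def by auto
  have bij0: "bij_betw (j ?s ?d0) (cs_carrier (A ?d0)) (cs_carrier (A ?s))"
    using N_iso[OF K(2,1,4)] unfolding star_iso_def by blast
  have bij1: "bij_betw (j ?s ?d1) (cs_carrier (A ?d1)) (cs_carrier (A ?s))"
    using N_iso[OF K(3,1,5)] unfolding star_iso_def by blast
  have y: "j ?s ?d1 x \<in> cs_carrier (A ?s)" by (rule bij_betw_apply[OF bij1 x])
  let ?u = "inv_into (cs_carrier (A ?d0)) (j ?s ?d0) (j ?s ?d1 x)"
  have u: "?u \<in> cs_carrier (A ?d0)" by (rule bij_betw_apply[OF bij_betw_inv_into[OF bij0] y])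
  have ju: "j ?s ?d0 ?u = j ?s ?d1 x" by (rule bij_betw_inv_into_right[OF bij0 y])
  have comp: "\<forall>a\<in>K. \<forall>e\<in>K. a \<le> e \<longrightarrow> (\<forall>x\<in>cs_carrier (A a). \<omega> a x = \<omega> e (j e a x))"
    using w unfolding net_state_def by blast
  have "\<omega> ?d0 ?u = \<omega> ?s (j ?s ?d0 ?u)" using comp K u by blast
  also have "\<dots> = \<omega> ?s (j ?s ?d1 x)" using ju by simp
  also have "\<dots> = \<omega> ?d1 x" using comp K x by metis
  finally show ?thesis unfolding hol1_def by simp
qed

lemma net_state_hol:
  "net_state K A j \<omega> \<Longrightarrow> is_path K a e p \<Longrightarrow> x \<in> cs_carrier (A a) \<Longrightarrow> \<omega> e (hol A j p x) = \<omega> a x"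
proof (induction p arbitrary: a x)
  case Nil then show ?case by simp
next
  case (Cons b bs)
  have b: "is_simplex1 K b" "bd1 b = a" "is_path K (bd0 b) e bs" using Cons.prems by auto
  have h: "hol1 A j b x \<in> cs_carrier (A (bd0 b))"
    using hol1_iso[OF b(1)] Cons.prems(3) b(2) unfolding star_iso_def by (meson bij_betw_apply)
  have "\<omega> e (hol A j (b # bs) x) = \<omega> (bd0 b) (hol1 A j b x)"
    using Cons.IH[OF Cons.prems(1) b(3) h] by simp
  also have "\<dots> = \<omega> a x" using net_state_hol1[OF Cons.prems(1) b(1)] Cons.prems(3) b(2) by simp
  finally show ?case .
qed

definition rs :: "'k simplex1 \<Rightarrow> 'k simplex1" where
  "rs b = (bd1 b, bd0 b, supp b)"

definition revp :: "'k simplex1 list \<Rightarrow> 'k simplex1 list" where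
  "revp p = rev (map rs p)"

lemma is_path_append:
  "is_path K a m p \<Longrightarrow> is_path K m e q \<Longrightarrow> is_path K a e (p @ q)"
  by (induction p arbitrary: a) auto

lemma hol_append: "hol A j (p @ q) = hol A j q \<circ> hol A j p"
  by (induction p) auto

lemma is_path_revp: "is_path K a e p \<Longrightarrow> is_path K e a (revp p)"
proof (induction p arbitrary: a)
  case Nil then show ?case by (auto simp: revp_def)
next
  case (Cons b bs)
  have b: "is_simplex1 K b" "bd1 b = a" "is_path K (bd0 b) e bs" using Cons.prems by auto
  have 1: "is_path K e (bd0 b) (revp bs)" using Cons.IH[OF b(3)] .
  have 2: "is_path K (bd0 b) a [rs b]"
    using b(1,2) by (auto simp: rs_def is_simplex1_def bd0_def bd1_def supp_def)
  show ?case using is_path_append[OF 1 2] by (simp add: revp_def)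
qed

lemma hol1_rs:
  assumes b: "is_simplex1 K b" and x: "x \<in> cs_carrier (A (bd1 b))"
  shows "hol1 A j (rs b) (hol1 A j b x) = x"
proof -
  let ?s = "supp b" and ?d0 = "bd0 b" and ?d1 = "bd1 b"
  have K: "?s \<in> K" "?d0 \<in> K" "?d1 \<in> K" "?d0 \<le> ?s" "?d1 \<le> ?s" using b unfolding is_simplex1_def by auto
  have bij0: "bij_betw (j ?s ?d0) (cs_carrier (A ?d0)) (cs_carrier (A ?s))"
    using N_iso[OF K(2,1,4)] unfolding star_iso_def by blast
  have bij1: "bij_betw (j ?s ?d1) (cs_carrier (A ?d1)) (cs_carrier (A ?s))"
    using N_iso[OF K(3,1,5)] unfolding star_iso_def by blast
  have y: "j ?s ?d1 x \<in> cs_carrier (A ?s)" by (rule bij_betw_apply[OF bij1 x])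
  let ?u = "inv_into (cs_carrier (A ?d0)) (j ?s ?d0) (j ?s ?d1 x)"
  have ju: "j ?s ?d0 ?u = j ?s ?d1 x" by (rule bij_betw_inv_into_right[OF bij0 y])
  have "hol1 A j (rs b) (hol1 A j b x) = inv_into (cs_carrier (A ?d1)) (j ?s ?d1) (j ?s ?d0 ?u)"
    by (simp add: hol1_def rs_def bd0_def bd1_def supp_def)
  also have "\<dots> = x" using ju bij_betw_inv_into_left[OF bij1 x] by simp
  finally show ?thesis .
qed

lemma hol_revp: "is_path K a e p \<Longrightarrow> x \<in> cs_carrier (A a) \<Longrightarrow> hol A j (revp p) (hol A j p x) = x"
proof (induction p arbitrary: a x)
  case Nil then show ?case by (simp add: revp_def)
next
  case (Cons b bs)
  have b: "is_simplex1 K b" "bd1 b = a" "is_path K (bd0 b) e bs" using Cons.prems by auto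
  have h: "hol1 A j b x \<in> cs_carrier (A (bd0 b))"
    using hol1_iso[OF b(1)] Cons.prems(2) b(2) unfolding star_iso_def by (meson bij_betw_apply)
  have "hol A j (revp (b # bs)) (hol A j (b # bs) x)
      = hol1 A j (rs b) (hol A j (revp bs) (hol A j bs (hol1 A j b x)))"
    by (simp add: revp_def hol_append)
  also have "\<dots> = hol1 A j (rs b) (hol1 A j b x)" using Cons.IH[OF b(3) h] by simp
  also have "\<dots> = x" using hol1_rs[OF b(1)] Cons.prems(2) b(2) by simp
  finally show ?case .
qed

lemma path_indep:
  assumes phi: "invariant_state K A j z \<phi>" and p: "is_path K a z p" and q: "is_path K a z q"
    and x: "x \<in> cs_carrier (A a)"
  shows "\<phi> (hol A j p x) = \<phi> (hol A j q x)"
proof -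
  have L: "is_path K z z (revp p @ q)" using is_path_append[OF is_path_revp[OF p] q] .
  have hx: "hol A j p x \<in> cs_carrier (A z)" using hol_in[OF p x] .
  have "hol A j (revp p @ q) (hol A j p x) = hol A j q x"
    using hol_revp[OF p x] by (simp add: hol_append)
  moreover have "\<phi> (hol A j (revp p @ q) (hol A j p x)) = \<phi> (hol A j p x)"
    using phi L hx unfolding invariant_state_def by simp
  ultimately show ?thesis by simp
qed

end

theorem lemma4p1:
  fixes K :: "'k::order set" and A :: "'k \<Rightarrow> 'x cstar" and j :: "'k \<Rightarrow> 'k \<Rightarrow> 'x \<Rightarrow> 'x"
    and z :: 'k
  assumes "cstar_net_bundle K A j"
    and "pathwise_connected K"
    and "z \<in> K"
  shows "bij_betw (\<lambda>\<omega>. \<omega> z) {\<omega>. net_state K A j \<omega>} {\<phi>. invariant_state K A j z \<phi>}"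
proof -
  note N = assms(1)
  have conn: "\<And>a. a \<in> K \<Longrightarrow> \<exists>p. is_path K a z p" using assms(2,3) unfolding pathwise_connected_def by blast
  have maps: "invariant_state K A j z (\<omega> z)" if w: "net_state K A j \<omega>" for \<omega>
  proof -
    have "is_state (A z) (\<omega> z)" using w assms(3) unfolding net_state_def by blast
    thus ?thesis unfolding invariant_state_def using net_state_hol[OF N w] by blast
  qed
  have inj: "inj_on (\<lambda>\<omega>. \<omega> z) {\<omega>. net_state K A j \<omega>}"
  proof (rule inj_onI)
    fix \<omega> \<omega>' assume w: "\<omega> \<in> {\<omega>. net_state K A j \<omega>}" and w': "\<omega>' \<in> {\<omega>. net_state K A j \<omega>}"
      and eq: "\<omega> z = \<omega>' z"
    show "\<omega> = \<omega>'"
    proof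
      fix a show "\<omega> a = \<omega>' a"
      proof (cases "a \<in> K")
        case False then show ?thesis using w w' unfolding net_state_def extensional_def by auto
      next
        case True
        obtain p where p: "is_path K a z p" using conn[OF True] by blast
        show ?thesis
        proof
          fix x show "\<omega> a x = \<omega>' a x"
          proof (cases "x \<in> cs_carrier (A a)")
            case True
            then show ?thesis using net_state_hol[OF N _ p True] w w' eq by (metis mem_Collect_eq)
          next
            case False
            have "is_state (A a) (\<omega> a)" "is_state (A a) (\<omega>' a)"
              using w w' \<open>a \<in> K\<close> unfolding net_state_def by auto
            then show ?thesis using False unfolding is_state_def extensional_def by auto
          qed
        qed
      qed
    qed
  qed
  have surj: "\<phi> \<in> (\<lambda>\<omega>. \<omega> z) ` {\<omega>. net_state K A j \<omega>}" if phi: "invariant_state K A j z \<phi>" for \<phi>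
  proof -
    define P where "P a = (SOME p. is_path K a z p)" for a
    have P: "\<And>a. a \<in> K \<Longrightarrow> is_path K a z (P a)" unfolding P_def using conn by (metis someI_ex)
    define \<omega> where "\<omega> a = (if a \<in> K then restrict (\<phi> \<circ> hol A j (P a)) (cs_carrier (A a)) else undefined)" for a
    have st: "is_state (A z) \<phi>" using phi unfolding invariant_state_def by blast
    have wz: "\<omega> z = \<phi>"
    proof
      fix x show "\<omega> z x = \<phi> x"
      proof (cases "x \<in> cs_carrier (A z)")
        case True then show ?thesis using phi P[OF assms(3)] assms(3)
          unfolding \<omega>_def invariant_state_def by simp
      next
        case False then show ?thesis using st assms(3) unfolding \<omega>_def is_state_def extensional_def by simp
      qed
    qed
    have ns: "net_state K A j \<omega>" unfolding net_state_def
    proof (intro conjI ballI impI)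
      show "\<omega> \<in> extensional K" unfolding \<omega>_def extensional_def by simp
    next
      fix a assume a: "a \<in> K"
      show "is_state (A a) (\<omega> a)" using a state_pullback[OF hol_iso[OF N P[OF a]] N_U[OF N a] st]
        unfolding \<omega>_def by simp
    next
      fix a e x assume a: "a \<in> K" and e: "e \<in> K" and le: "a \<le> e" and x: "x \<in> cs_carrier (A a)"
      have jx: "j e a x \<in> cs_carrier (A e)"
        using N_iso[OF N a e le] x unfolding star_iso_def by (meson bij_betw_apply)
      let ?b = "(e, a, e)"
      have bs: "is_simplex1 K ?b" using a e le by (simp add: is_simplex1_def bd0_def bd1_def supp_def)
      have q: "is_path K a z (?b # P e)" using bs P[OF e] by (simp add: bd0_def bd1_def)
      have h1: "hol1 A j ?b x = j e a x"
        using inv_jaa[OF N e jx] by (simp add: hol1_def bd0_def bd1_def supp_def)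
      have "\<omega> a x = \<phi> (hol A j (P a) x)" using a x unfolding \<omega>_def by simp
      also have "\<dots> = \<phi> (hol A j (?b # P e) x)" using path_indep[OF N phi P[OF a] q x] .
      also have "\<dots> = \<phi> (hol A j (P e) (j e a x))" using h1 by simp
      also have "\<dots> = \<omega> e (j e a x)" using e jx unfolding \<omega>_def by simp
      finally show "\<omega> a x = \<omega> e (j e a x)" .
    qed
    show ?thesis using ns wz by blast
  qed
  have "(\<lambda>\<omega>. \<omega> z) ` {\<omega>. net_state K A j \<omega>} = {\<phi>. invariant_state K A j z \<phi>}"
  proof
    show "(\<lambda>\<omega>. \<omega> z) ` {\<omega>. net_state K A j \<omega>} \<subseteq> {\<phi>. invariant_state K A j z \<phi>}"
      using maps by auto
    show "{\<phi>. invariant_state K A j z \<phi>} \<subseteq> (\<lambda>\<omega>. \<omega> z) ` {\<omega>. net_state K A j \<omega>}"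
      using surj by auto
  qed
  then show ?thesis unfolding bij_betw_def using inj by simp
qed

end
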